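(* Let $G$ be a threshold graph on $n$ vertices with binary string $b=0^{s_1}1^{t_1}\cdots0^{s_k}1^{t_k}$ (all $s_i,t_i\geq1$). Let $s=\min_i s_i$, $t=\min_i t_i$, $\sigma=\max_i s_i$, $\tau=\max_i t_i$. Let $G'$ be the threshold graph with binary string $b'=(0^s1^t)^k$ (the block $0^s1^t$ repeated $k$ times) and $G''$ the threshold graph with binary string $b''=(0^\sigma1^\tau)^k$, with $n'=k(s+t)$ and $n''=k(\sigma+\tau)$ vertices respectively. Then \[ \lambda_i(G'')\leq\lambda_i(G)\leq\lambda_i(G'),\quad i=1,\ldots,k, \] and \[ \lambda_{n'-j}(G')\leq\lambda_{n-j}(G)\leq\lambda_{n''-j}(G''),\quad j=0,\ldots,k-1. \]
   Context: Eigenvalues of a graph $H$ on $m$ vertices are those of its $(0,1)$-adjacency matrix, ordered $\lambda_1(H)\leq\cdots\leq\lambda_m(H)$. Threshold graphs from binary strings: given $b=b_1\cdots b_n\in\{0,1\}^n$ with $b_1=0$, start with a single vertex and for $j=2,\ldots,n$ add a new vertex adjacent to all previous vertices if $b_j=1$ and isolated if $b_j=0$; the result is $G(b)$, and $b$ is its binary string. $0^s$ (resp. $1^t$) denotes $s$ consecutive zeros (resp. $t$ consecutive ones). *)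

theory Defs
  imports "Jordan_Normal_Form.Char_Poly"
begin

text \<open>Binary strings are lists of booleans: True = 1, False = 0. Vertex indices are 0-based.
  In the threshold graph G(b), for vertices i < j, i and j are adjacent iff b_j = 1
  (vertex j was added as a dominating vertex).\<close>

definition threshold_adj :: "bool list \<Rightarrow> real mat" where
  "threshold_adj b = mat (length b) (length b)
     (\<lambda>(i, j). if i \<noteq> j \<and> b ! (max i j) then 1 else 0)"

text \<open>Eigenvalues (with multiplicity) of a real matrix, in nondecreasing order, as the
  sorted multiset of real roots of the characteristic polynomial; 1-indexed:
  eig A 1 is the smallest.\<close>

definition eig :: "real mat \<Rightarrow> nat \<Rightarrow> real" where
  "eig A i = sorted_list_of_multiset (proots (char_poly A)) ! (i - 1)"

definition block_string :: "nat list \<Rightarrow> nat list \<Rightarrow> bool list" where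
  "block_string s t = concat (map (\<lambda>i. replicate (s ! i) False @ replicate (t ! i) True)
                         [0..<length s])"

end

theory Submission imports Defs "Jordan_Normal_Form.Schur_Decomposition" "HOL-Library.Sublist" begin

lemma conj_real_vec[simp]: "conjugate (v :: real vec) = v"
  by (rule eq_vecI, auto)

lemma sprod_self_ge0: "(v :: real vec) \<bullet> v \<ge> 0"
  unfolding scalar_prod_def by (intro sum_nonneg, auto)

lemma ortho_ext:
  fixes v :: "real vec"
  assumes v: "v \<in> carrier_vec n" and v0: "v \<noteq> 0\<^sub>v n"
  shows "\<exists>Q. Q \<in> carrier_mat n n \<and> transpose_mat Q * Q = 1\<^sub>m n \<and> Q * transpose_mat Q = 1\<^sub>m n
     \<and> col Q 0 = (1 / sqrt (v \<bullet> v)) \<cdot>\<^sub>v v"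
proof -
  interpret cof_vec_space n "TYPE(real)" .
  define b where "b = basis_completion v"
  define ws where "ws = gram_schmidt n b"
  from basis_completion[OF v v0, folded b_def]
  have dist_b: "distinct b" 
    and indep: "\<not> lin_dep (set b)" and b: "set b \<subseteq> carrier_vec n" and hdb: "hd b = v" 
    and len_b: "length b = n" by auto
  have n: "n \<noteq> 0" using v v0 by auto
  from hdb len_b n obtain vs where bv: "b = v # vs" by (cases b, auto)
  from gram_schmidt_result[OF b dist_b indep refl, folded ws_def]
  have ws: "set ws \<subseteq> carrier_vec n" "corthogonal ws" "length ws = n" 
    by (auto simp: len_b)
  from gram_schmidt_hd[OF v, of vs, folded bv] have hdws: "hd ws = v" unfolding ws_def .
  have ws0: "ws ! 0 = v" using hdws ws(3) n by (cases ws, auto)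
  define us where "us = map (\<lambda>w. (1 / sqrt (w \<bullet> w)) \<cdot>\<^sub>v w) ws"
  define Q where "Q = mat_of_cols n us"
  have lus: "length us = n" using ws by (simp add: us_def)
  have wsc: "\<And>i. i < n \<Longrightarrow> ws ! i \<in> carrier_vec n" using ws by auto
  have usc: "\<And>i. i < n \<Longrightarrow> us ! i \<in> carrier_vec n" using wsc ws by (auto simp: us_def)
  have Q: "Q \<in> carrier_mat n n" unfolding Q_def using lus by auto
  have orth: "\<And>i j. i < n \<Longrightarrow> j < n \<Longrightarrow> (ws ! i \<bullet> ws ! j = 0) = (i \<noteq> j)"
    using ws(2) ws(3) unfolding corthogonal_def by auto
  have usprod: "us ! i \<bullet> us ! j = (if i = j then 1 else 0)" if ij: "i < n" "j < n" for i j
  proof -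
    have "us ! i \<bullet> us ! j = (1 / sqrt (ws!i \<bullet> ws!i)) * ((1 / sqrt (ws!j \<bullet> ws!j)) * (ws ! i \<bullet> ws ! j))"
      unfolding us_def using ij ws wsc[OF ij(1)] wsc[OF ij(2)] by simp
    also have "\<dots> = (if i = j then 1 else 0)"
    proof (cases "i = j")
      case True
      have "ws!i \<bullet> ws!i \<noteq> 0" using orth[OF ij(1) ij(1)] by simp
      moreover have "ws!i \<bullet> ws!i \<ge> 0" by (rule sprod_self_ge0)
      ultimately have "ws!i \<bullet> ws!i > 0" by linarith
      then show ?thesis using True by (simp add: field_simps real_sqrt_mult[symmetric])
    next
      case False thus ?thesis using orth[OF ij] by simp
    qed
    finally show ?thesis .
  qed
  have QQ: "transpose_mat Q * Q = 1\<^sub>m n"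
    by (rule eq_matI, insert Q lus usc usprod, auto simp: Q_def)
  have QQ': "Q * transpose_mat Q = 1\<^sub>m n"
    by (rule mat_mult_left_right_inverse[OF _ Q QQ], insert Q, auto)
  have "col Q 0 = us ! 0" unfolding Q_def using lus n usc[of 0] by simp
  also have "\<dots> = (1 / sqrt (v \<bullet> v)) \<cdot>\<^sub>v v" unfolding us_def using ws0 ws n by simp
  finally show ?thesis using Q QQ QQ' by blast
qed

lemma sym_eigenvalue:
  fixes A :: "real mat"
  assumes A: "A \<in> carrier_mat n n" and sym: "transpose_mat A = A" and n: "n > 0"
  shows "\<exists>e. eigenvalue A e"
proof -
  define Ac where "Ac = map_mat complex_of_real A"
  have Ac: "Ac \<in> carrier_mat n n" using A by (simp add: Ac_def)
  have cp: "char_poly Ac = map_poly of_real (char_poly A)"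
    unfolding Ac_def by (rule of_real_hom.char_poly_hom[OF A])
  have "degree (char_poly Ac) = n" using degree_monic_char_poly[OF Ac] by simp
  hence "\<not> constant (poly (char_poly Ac))" using n by (simp add: constant_degree)
  from fundamental_theorem_of_algebra[OF this] obtain z where z: "poly (char_poly Ac) z = 0" by blast
  hence "eigenvalue Ac z" using eigenvalue_root_char_poly[OF Ac] by simp
  then obtain w where w: "w \<in> carrier_vec n" "w \<noteq> 0\<^sub>v n" "Ac *\<^sub>v w = z \<cdot>\<^sub>v w"
    unfolding eigenvalue_def eigenvector_def using Ac by auto
  have Aij: "A $$ (i,j) = A $$ (j,i)" if "i < n" "j < n" for i j
    using arg_cong[OF sym, of "\<lambda>M. M $$ (i,j)"] that A by auto
  have row: "(Ac *\<^sub>v w) $ i = (\<Sum>j<n. of_real (A $$ (i,j)) * w $ j)" if "i < n" for i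
    using that A w(1) Ac unfolding Ac_def
    by (auto simp: scalar_prod_def row_def lessThan_atLeast0)
  define S where "S = (\<Sum>i<n. \<Sum>j<n. of_real (A $$ (i,j)) * cnj (w $ i) * w $ j)"
  define R where "R = (\<Sum>i<n. cnj (w $ i) * w $ i)"
  have "S = (\<Sum>i<n. cnj (w $ i) * (Ac *\<^sub>v w) $ i)"
    unfolding S_def by (rule sum.cong, simp, subst row, auto simp: sum_distrib_left mult.commute mult.left_commute)
  also have "\<dots> = (\<Sum>i<n. cnj (w $ i) * (z * w $ i))"
    using w(1) by (intro sum.cong, auto simp: w(3))
  also have "\<dots> = z * R" unfolding R_def by (simp add: sum_distrib_left mult.commute mult.left_commute)
  finally have SR: "S = z * R" .
  have "cnj S = (\<Sum>i<n. \<Sum>j<n. of_real (A $$ (i,j)) * w $ i * cnj (w $ j))"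
    unfolding S_def by (simp add: cnj_sum)
  also have "\<dots> = (\<Sum>j<n. \<Sum>i<n. of_real (A $$ (i,j)) * w $ i * cnj (w $ j))"
    by (rule sum.swap)
  also have "\<dots> = S" unfolding S_def
    by (intro sum.cong refl, subst Aij, auto simp: mult.commute mult.left_commute)
  finally have cS: "cnj S = S" .
  have Rr: "R = of_real (\<Sum>i<n. (cmod (w $ i))^2)"
    unfolding R_def of_real_sum by (intro sum.cong refl, simp add: complex_mult_cnj mult.commute cmod_def)
  obtain i where i: "i < n" "w $ i \<noteq> 0" using w(1,2) by (metis eq_vecI carrier_vecD index_zero_vec)
  have "(\<Sum>i<n. (cmod (w $ i))^2) \<ge> (cmod (w $ i))^2"
    by (rule member_le_sum, insert i, auto)
  moreover have "(cmod (w $ i))^2 > 0" using i by auto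
  ultimately have "R \<noteq> 0" unfolding Rr of_real_eq_0_iff by linarith
  moreover have "cnj R = R" unfolding Rr by simp
  ultimately have "cnj z = z" using cS SR by (metis complex_cnj_mult mult_right_cancel)
  hence zr: "z = of_real (Re z)" by (metis Reals_cnj_iff of_real_Re)
  have "of_real (poly (char_poly A) (Re z)) = (0::complex)"
    using z unfolding cp by (subst (asm) zr, simp add: of_real_hom.poly_map_poly)
  hence "poly (char_poly A) (Re z) = 0" by simp
  thus ?thesis using eigenvalue_root_char_poly[OF A] by blast
qed


lemma assoc4: "A \<in> carrier_mat n n \<Longrightarrow> B \<in> carrier_mat n n \<Longrightarrow> C \<in> carrier_mat n n \<Longrightarrow> D \<in> carrier_mat n n
  \<Longrightarrow> (A * B) * (C * D) = A * (B * C) * D"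
  by (simp add: assoc_mult_mat[of _ n n _ n _ n])

lemma assoc5: "A \<in> carrier_mat n n \<Longrightarrow> B \<in> carrier_mat n n \<Longrightarrow> C \<in> carrier_mat n n \<Longrightarrow> D \<in> carrier_mat n n
  \<Longrightarrow> E \<in> carrier_mat n n \<Longrightarrow> A * B * C * (D * E) = A * (B * C * D) * E"
  by (simp add: assoc_mult_mat[of _ n n _ n _ n])

lemma spectral:
  fixes A :: "real mat"
  assumes "A \<in> carrier_mat n n" "transpose_mat A = A"
  shows "\<exists>Q D. Q \<in> carrier_mat n n \<and> transpose_mat Q * Q = 1\<^sub>m n \<and> Q * transpose_mat Q = 1\<^sub>m n
     \<and> D \<in> carrier_mat n n \<and> diagonal_mat D \<and> A = Q * D * transpose_mat Q"
  using assms
proof (induction n arbitrary: A)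
  case 0
  show ?case
    by (rule exI[of _ "1\<^sub>m 0"], rule exI[of _ "1\<^sub>m 0"], insert 0, auto intro!: eq_matI simp: diagonal_mat_def)
next
  case (Suc m A)
  let ?n = "Suc m"
  have A: "A \<in> carrier_mat ?n ?n" and sym: "transpose_mat A = A" using Suc.prems by auto
  obtain e where "eigenvalue A e" using sym_eigenvalue[OF A sym] by auto
  then obtain v where v: "v \<in> carrier_vec ?n" "v \<noteq> 0\<^sub>v ?n" "A *\<^sub>v v = e \<cdot>\<^sub>v v"
    unfolding eigenvalue_def eigenvector_def using A by auto
  obtain Q0 where Q0all: "Q0 \<in> carrier_mat ?n ?n \<and> transpose_mat Q0 * Q0 = 1\<^sub>m ?n
     \<and> Q0 * transpose_mat Q0 = 1\<^sub>m ?n \<and> col Q0 0 = (1 / sqrt (v \<bullet> v)) \<cdot>\<^sub>v v"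
    using ortho_ext[OF v(1,2)] by (rule exE)
  have Q0: "Q0 \<in> carrier_mat ?n ?n" and Q0Q0: "transpose_mat Q0 * Q0 = 1\<^sub>m ?n"
    and Q0Q0': "Q0 * transpose_mat Q0 = 1\<^sub>m ?n" and Q0c: "col Q0 0 = (1 / sqrt (v \<bullet> v)) \<cdot>\<^sub>v v"
    using Q0all by (simp_all only:)
  define u where "u = col Q0 0"
  have u: "u \<in> carrier_vec ?n" unfolding u_def by (rule col_carrier_vec[OF _ Q0], simp)
  have Au: "A *\<^sub>v u = e \<cdot>\<^sub>v u"
  proof -
    have "A *\<^sub>v u = (1 / sqrt (v \<bullet> v)) \<cdot>\<^sub>v (e \<cdot>\<^sub>v v)"
      unfolding u_def Q0c using mult_mat_vec[OF A v(1)] v(3) by simp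
    also have "\<dots> = e \<cdot>\<^sub>v u" unfolding u_def Q0c by (simp add: smult_smult_assoc)
    finally show ?thesis .
  qed
  define A' where "A' = transpose_mat Q0 * A * Q0"
  have A': "A' \<in> carrier_mat ?n ?n" unfolding A'_def using Q0 A by auto
  have A'sym: "transpose_mat A' = A'"
  proof -
    have "transpose_mat A' = transpose_mat Q0 * transpose_mat (transpose_mat Q0 * A)"
      unfolding A'_def by (rule transpose_mult[of _ ?n ?n], insert Q0 A, auto)
    also have "transpose_mat (transpose_mat Q0 * A) = transpose_mat A * Q0"
      by (subst transpose_mult[of _ ?n ?n], insert Q0 A, auto)
    finally show ?thesis unfolding sym A'_def using Q0 A by simp
  qed
  have A'col: "A' $$ (i, 0) = (if i = 0 then e else 0)" if i: "i < ?n" for i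
  proof -
    have A'eq: "A' = transpose_mat Q0 * (A * Q0)" unfolding A'_def using Q0 A by auto
    have r: "row (transpose_mat Q0) i = col Q0 i" using i Q0 by simp
    have c: "col (A * Q0) 0 = A *\<^sub>v u" unfolding u_def by (rule col_mult2, insert Q0 A, auto)
    have "A' $$ (i, 0) = col Q0 i \<bullet> (A *\<^sub>v u)"
      unfolding A'eq r[symmetric] c[symmetric] by (rule index_mult_mat(1), insert i Q0 A, auto)
    also have "\<dots> = e * (col Q0 i \<bullet> u)" unfolding Au using Q0 u i by simp
    also have "col Q0 i \<bullet> u = (transpose_mat Q0 * Q0) $$ (i, 0)" using i Q0 by (simp add: u_def)
    also have "\<dots> = (if i = 0 then 1 else 0)" unfolding Q0Q0 using i by simp
    finally show ?thesis by simp
  qed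
  have A'row: "A' $$ (0, j) = (if j = 0 then e else 0)" if j: "j < ?n" for j
    using A'col[OF j] arg_cong[OF A'sym, of "\<lambda>M. M $$ (j, 0)"] j A' by auto
  define A3 where "A3 = mat m m (\<lambda>(i,j). A' $$ (Suc i, Suc j))"
  have A3: "A3 \<in> carrier_mat m m" unfolding A3_def by auto
  have A3sym: "transpose_mat A3 = A3"
  proof -
    have A'ij: "A' $$ (i,j) = A' $$ (j,i)" if "i < ?n" "j < ?n" for i j
      using arg_cong[OF A'sym, of "\<lambda>M. M $$ (i,j)"] A' that by auto
    show ?thesis unfolding A3_def by (rule eq_matI, auto simp: A'ij)
  qed
  define E1 where "E1 = mat 1 1 (\<lambda>_. e)"
  have E1: "E1 \<in> carrier_mat 1 1" unfolding E1_def by auto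
  have A'blk: "A' = four_block_mat E1 (0\<^sub>m 1 m) (0\<^sub>m m 1) A3"
  proof (rule eq_matI)
    fix i j assume ij: "i < dim_row (four_block_mat E1 (0\<^sub>m 1 m) (0\<^sub>m m 1) A3)"
      "j < dim_col (four_block_mat E1 (0\<^sub>m 1 m) (0\<^sub>m m 1) A3)"
    hence i: "i < ?n" and j: "j < ?n" using E1 A3 by auto
    show "A' $$ (i, j) = four_block_mat E1 (0\<^sub>m 1 m) (0\<^sub>m m 1) A3 $$ (i, j)"
    proof (cases "i = 0")
      case True thus ?thesis using A'row[OF j] j E1 A3 by (auto simp: E1_def)
    next
      case False
      then obtain i' where i': "i = Suc i'" by (cases i, auto)
      show ?thesis
      proof (cases "j = 0")
        case True thus ?thesis using A'col[OF i] i E1 A3 False by (auto simp: E1_def)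
      next
        case False
        then obtain j' where j': "j = Suc j'" by (cases j, auto)
        show ?thesis using i j E1 A3 i' j' by (auto simp: A3_def)
      qed
    qed
  qed (insert A' E1 A3, auto)
  obtain Q3 D3 where Q3: "Q3 \<in> carrier_mat m m"
    and Q3Q3: "transpose_mat Q3 * Q3 = 1\<^sub>m m" and Q3Q3': "Q3 * transpose_mat Q3 = 1\<^sub>m m"
    and D3: "D3 \<in> carrier_mat m m" and D3d: "diagonal_mat D3" and A3eq: "A3 = Q3 * D3 * transpose_mat Q3"
    by (insert Suc.IH[OF A3 A3sym], elim exE conjE, rule that, assumption+)
  define F where "F = four_block_mat (1\<^sub>m 1) (0\<^sub>m 1 m) (0\<^sub>m m 1) Q3"
  define D where "D = four_block_mat E1 (0\<^sub>m 1 m) (0\<^sub>m m 1) D3"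
  define Q where "Q = Q0 * F"
  have F: "F \<in> carrier_mat ?n ?n" unfolding F_def using Q3 by auto
  have D: "D \<in> carrier_mat ?n ?n" unfolding D_def using D3 E1 by auto
  have Q: "Q \<in> carrier_mat ?n ?n" unfolding Q_def using F Q0 by auto
  have Q0T: "transpose_mat Q0 \<in> carrier_mat ?n ?n" using Q0 by auto
  have FTc: "transpose_mat F \<in> carrier_mat ?n ?n" using F by auto
  have FT: "transpose_mat F = four_block_mat (1\<^sub>m 1) (0\<^sub>m 1 m) (0\<^sub>m m 1) (transpose_mat Q3)"
    unfolding F_def by (subst transpose_four_block_mat, insert Q3, auto)
  have FF: "transpose_mat F * F = 1\<^sub>m ?n"
    unfolding FT unfolding F_def
    by (subst mult_four_block_mat[of _ 1 1 _ m _ m _ _ 1 _ m], insert Q3 Q3Q3, auto)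
  have FDF: "F * D * transpose_mat F = A'"
  proof -
    have "F * D = four_block_mat E1 (0\<^sub>m 1 m) (0\<^sub>m m 1) (Q3 * D3)"
      unfolding F_def D_def
      by (subst mult_four_block_mat[of _ 1 1 _ m _ m _ _ 1 _ m], insert Q3 D3 E1, auto)
    hence "F * D * transpose_mat F = four_block_mat E1 (0\<^sub>m 1 m) (0\<^sub>m m 1) (Q3 * D3 * transpose_mat Q3)"
      unfolding FT
      by (simp, subst mult_four_block_mat[of _ 1 1 _ m _ m _ _ 1 _ m], insert Q3 D3 E1, auto)
    thus ?thesis unfolding A'blk A3eq .
  qed
  have QQ: "transpose_mat Q * Q = 1\<^sub>m ?n"
  proof -
    have "transpose_mat Q * Q = transpose_mat F * (transpose_mat Q0 * Q0) * F"
      unfolding Q_def using Q0 F Q0T FTc by (subst transpose_mult[of _ ?n ?n], auto intro: assoc4)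
    also have "\<dots> = 1\<^sub>m ?n" unfolding Q0Q0 using F FF by simp
    finally show ?thesis .
  qed
  have QQ': "Q * transpose_mat Q = 1\<^sub>m ?n"
    by (rule mat_mult_left_right_inverse[OF _ Q QQ], insert Q, auto)
  have "Q * D * transpose_mat Q = Q0 * (F * D * transpose_mat F) * transpose_mat Q0"
    unfolding Q_def using Q0 F D Q0T FTc by (subst transpose_mult[of _ ?n ?n], auto simp: assoc_mult_mat[of _ ?n ?n _ ?n _ ?n])
  also have "\<dots> = (Q0 * transpose_mat Q0) * A * (Q0 * transpose_mat Q0)"
    unfolding FDF A'_def using Q0 A Q0T by (auto simp: assoc_mult_mat[of _ ?n ?n _ ?n _ ?n])
  also have "\<dots> = A" unfolding Q0Q0' using A by simp
  finally have AQ: "A = Q * D * transpose_mat Q" ..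
  have Dd: "diagonal_mat D"
    unfolding diagonal_mat_def D_def using D3d E1 D3
    by (auto simp: diagonal_mat_def E1_def)
  show ?case by (rule exI[of _ Q], rule exI[of _ D], intro conjI, fact+)
qed


lemma proots_linear_prod: "proots (\<Prod>a\<leftarrow>xs. [:- a, 1:]) = mset (xs :: real list)"
proof (induction xs)
  case (Cons a xs)
  have nz: "(\<Prod>a\<leftarrow>xs. [:- a, 1:]) \<noteq> (0 :: real poly)"
    by (auto simp: prod_list_zero_iff)
  have "proots (\<Prod>a\<leftarrow>a#xs. [:- a, 1:]) = proots ([:- a, 1:] * (\<Prod>a\<leftarrow>xs. [:- a, 1:]))" by simp
  also have "\<dots> = proots [:- a, 1:] + proots (\<Prod>a\<leftarrow>xs. [:- a, 1:])" by (rule proots_mult, simp, fact nz)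
  also have "\<dots> = {#a#} + mset xs" using Cons.IH proots_linear_factor[of "-a"] by simp
  finally show ?case by simp
qed simp

lemma spec_proots:
  fixes A Q D :: "real mat"
  assumes Q: "Q \<in> carrier_mat n n" and QQ: "transpose_mat Q * Q = 1\<^sub>m n" and QQ': "Q * transpose_mat Q = 1\<^sub>m n"
    and D: "D \<in> carrier_mat n n" and Dd: "diagonal_mat D" and AQ: "A = Q * D * transpose_mat Q"
  shows "proots (char_poly A) = mset (diag_mat D)"
proof -
  have A: "A \<in> carrier_mat n n" using AQ Q D by auto
  have "similar_mat_wit A D Q (transpose_mat Q)"
    by (rule similar_mat_witI[of _ _ n], insert Q QQ QQ' D AQ A, auto)
  hence "similar_mat A D" unfolding similar_mat_def by blast
  hence "char_poly A = char_poly D" by (rule char_poly_similar)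
  also have "upper_triangular D" using Dd D unfolding diagonal_mat_def upper_triangular_def by auto
  hence "char_poly D = (\<Prod>a\<leftarrow>diag_mat D. [:- a, 1:])" by (rule char_poly_upper_triangular[OF D])
  finally show ?thesis by (simp add: proots_linear_prod)
qed

lemma orth_sprod:
  fixes Q :: "real mat"
  assumes Q: "Q \<in> carrier_mat n n" and QQ: "transpose_mat Q * Q = 1\<^sub>m n"
    and y: "y \<in> carrier_vec n" and z: "z \<in> carrier_vec n"
  shows "(Q *\<^sub>v y) \<bullet> (Q *\<^sub>v z) = y \<bullet> z"
proof -
  have "(Q *\<^sub>v y) \<bullet> (Q *\<^sub>v z) = (transpose_mat Q *\<^sub>v (Q *\<^sub>v y)) \<bullet> z"
    by (rule transpose_vec_mult_scalar[symmetric, OF Q z], insert Q y, auto)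
  also have "transpose_mat Q *\<^sub>v (Q *\<^sub>v y) = y"
    using assoc_mult_mat_vec[of "transpose_mat Q" n n Q n y, symmetric] Q y QQ by auto
  finally show ?thesis .
qed

lemma orth_inj:
  fixes Q :: "real mat"
  assumes Q: "Q \<in> carrier_mat n n" and QQ: "transpose_mat Q * Q = 1\<^sub>m n"
    and y: "y \<in> carrier_vec n" and Qy: "Q *\<^sub>v y = 0\<^sub>v n"
  shows "y = 0\<^sub>v n"
proof -
  have "y = transpose_mat Q *\<^sub>v (Q *\<^sub>v y)"
    using assoc_mult_mat_vec[of "transpose_mat Q" n n Q n y, symmetric] Q y QQ by auto
  also have "\<dots> = 0\<^sub>v n" unfolding Qy using Q by auto
  finally show ?thesis .
qed

lemma diag_qf:
  fixes D :: "real mat"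
  assumes D: "D \<in> carrier_mat n n" and Dd: "diagonal_mat D" and y: "y \<in> carrier_vec n"
  shows "y \<bullet> (D *\<^sub>v y) = (\<Sum>i<n. D $$ (i,i) * (y $ i)^2)"
proof -
  have row: "(D *\<^sub>v y) $ i = D $$ (i,i) * y $ i" if i: "i < n" for i
  proof -
    have "(D *\<^sub>v y) $ i = (\<Sum>j\<in>{0..<n}. D $$ (i,j) * y $ j)"
      using D y i by (simp add: scalar_prod_def row_def)
    also have "\<dots> = (\<Sum>j\<in>{0..<n}. if j = i then D $$ (i,i) * y $ j else 0)"
      by (rule sum.cong, insert Dd D i, auto simp: diagonal_mat_def)
    also have "\<dots> = D $$ (i,i) * y $ i" using i by simp
    finally show ?thesis .
  qed
  have "y \<bullet> (D *\<^sub>v y) = (\<Sum>i\<in>{0..<n}. y $ i * (D *\<^sub>v y) $ i)"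
    using D by (simp add: scalar_prod_def)
  also have "\<dots> = (\<Sum>i<n. D $$ (i,i) * (y $ i)^2)"
    by (subst atLeast0LessThan, rule sum.cong, auto simp: row power2_eq_square)
  finally show ?thesis .
qed

lemma spec_qf:
  fixes A Q D :: "real mat"
  assumes Q: "Q \<in> carrier_mat n n" and QQ: "transpose_mat Q * Q = 1\<^sub>m n"
    and D: "D \<in> carrier_mat n n" and Dd: "diagonal_mat D" and AQ: "A = Q * D * transpose_mat Q"
    and y: "y \<in> carrier_vec n"
  shows "(Q *\<^sub>v y) \<bullet> (A *\<^sub>v (Q *\<^sub>v y)) = (\<Sum>i<n. D $$ (i,i) * (y $ i)^2)"
    and "(Q *\<^sub>v y) \<bullet> (Q *\<^sub>v y) = (\<Sum>i<n. (y $ i)^2)"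
proof -
  have QT: "transpose_mat Q \<in> carrier_mat n n" using Q by auto
  have "A *\<^sub>v (Q *\<^sub>v y) = Q *\<^sub>v (D *\<^sub>v (transpose_mat Q *\<^sub>v (Q *\<^sub>v y)))"
    unfolding AQ using Q D QT y by (simp add: assoc_mult_mat_vec[of _ n n _ n])
  also have "transpose_mat Q *\<^sub>v (Q *\<^sub>v y) = y"
    using assoc_mult_mat_vec[of "transpose_mat Q" n n Q n y, symmetric] Q y QQ by auto
  finally have "(Q *\<^sub>v y) \<bullet> (A *\<^sub>v (Q *\<^sub>v y)) = y \<bullet> (D *\<^sub>v y)"
    using orth_sprod[OF Q QQ y, of "D *\<^sub>v y"] D y by auto
  also have "\<dots> = (\<Sum>i<n. D $$ (i,i) * (y $ i)^2)" by (rule diag_qf[OF D Dd y])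
  finally show "(Q *\<^sub>v y) \<bullet> (A *\<^sub>v (Q *\<^sub>v y)) = (\<Sum>i<n. D $$ (i,i) * (y $ i)^2)" .
  have "(Q *\<^sub>v y) \<bullet> (Q *\<^sub>v y) = y \<bullet> y" by (rule orth_sprod[OF Q QQ y y])
  also have "\<dots> = (\<Sum>i<n. (y $ i)^2)" using y
    by (simp add: scalar_prod_def atLeast0LessThan power2_eq_square)
  finally show "(Q *\<^sub>v y) \<bullet> (Q *\<^sub>v y) = (\<Sum>i<n. (y $ i)^2)" .
qed


definition selm :: "nat \<Rightarrow> nat list \<Rightarrow> real mat" where
  "selm n J = mat n (length J) (\<lambda>(i,k). if i = J ! k then 1 else 0)"

lemma selm_carrier: "selm n J \<in> carrier_mat n (length J)"
  unfolding selm_def by auto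

lemma selm_out:
  assumes a: "a \<in> carrier_vec (length J)" and i: "i < n" and iJ: "i \<notin> set J"
  shows "(selm n J *\<^sub>v a) $ i = 0"
proof -
  have "(selm n J *\<^sub>v a) $ i = (\<Sum>j\<in>{0..<length J}. (if i = J ! j then 1 else 0) * a $ j)"
    using a i by (simp add: selm_def scalar_prod_def row_def)
  also have "\<dots> = 0" by (rule sum.neutral, insert iJ, auto)
  finally show ?thesis .
qed

lemma selm_in:
  assumes a: "a \<in> carrier_vec (length J)" and d: "distinct J" and k: "k < length J" and Jk: "J ! k < n"
  shows "(selm n J *\<^sub>v a) $ (J ! k) = a $ k"
proof -
  have "(selm n J *\<^sub>v a) $ (J ! k) = (\<Sum>j\<in>{0..<length J}. (if J ! k = J ! j then 1 else 0) * a $ j)"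
    using a Jk by (simp add: selm_def scalar_prod_def row_def)
  also have "\<dots> = (\<Sum>j\<in>{0..<length J}. if j = k then a $ j else 0)"
    by (rule sum.cong, insert d k, auto simp: nth_eq_iff_index_eq)
  also have "\<dots> = a $ k" using k by simp
  finally show ?thesis .
qed

lemma wide_kernel:
  fixes V U :: "real mat"
  assumes V: "V \<in> carrier_mat n r" and U: "U \<in> carrier_mat n g" and ng: "n < r + g"
  shows "\<exists>a b. a \<in> carrier_vec r \<and> b \<in> carrier_vec g \<and> (a \<noteq> 0\<^sub>v r \<or> b \<noteq> 0\<^sub>v g) \<and> V *\<^sub>v a = U *\<^sub>v b"
proof -
  define p where "p = r + g"
  define M where "M = mat p p (\<lambda>(i,j). if i < n then (if j < r then V $$ (i,j) else - U $$ (i, j - r)) else 0)"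
  have M: "M \<in> carrier_mat p p" unfolding M_def by auto
  have np: "n < p" using ng p_def by auto
  have "M = mat\<^sub>r p p (\<lambda>i. if i = n then 0\<^sub>v p else row M i)"
    by (rule eq_matI, auto simp: M_def)
  hence "det M = 0" using det_row_0[OF np, of "\<lambda>i. row M i"] M by auto
  then obtain z where z: "z \<in> carrier_vec p" "z \<noteq> 0\<^sub>v p" "M *\<^sub>v z = 0\<^sub>v p"
    using det_0_iff_vec_prod_zero[OF M] by auto
  define a where "a = vec r (\<lambda>j. z $ j)"
  define b where "b = vec g (\<lambda>j. z $ (r + j))"
  have a: "a \<in> carrier_vec r" and b: "b \<in> carrier_vec g" unfolding a_def b_def by auto
  have nz: "a \<noteq> 0\<^sub>v r \<or> b \<noteq> 0\<^sub>v g"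
  proof (rule ccontr)
    assume "\<not> (a \<noteq> 0\<^sub>v r \<or> b \<noteq> 0\<^sub>v g)"
    hence a0: "a = 0\<^sub>v r" and b0: "b = 0\<^sub>v g" by auto
    have "z = 0\<^sub>v p"
    proof (rule eq_vecI)
      fix j assume "j < dim_vec (0\<^sub>v p :: real vec)"
      hence j: "j < p" by simp
      show "z $ j = 0\<^sub>v p $ j"
      proof (cases "j < r")
        case True thus ?thesis using arg_cong[OF a0, of "\<lambda>v. v $ j"] j by (simp add: a_def)
      next
        case False
        hence "j - r < g" using j p_def by auto
        thus ?thesis using arg_cong[OF b0, of "\<lambda>v. v $ (j - r)"] j False by (simp add: b_def)
      qed
    qed (insert z, auto)
    thus False using z by simp
  qed
  have "V *\<^sub>v a = U *\<^sub>v b"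
  proof (rule eq_vecI)
    fix i assume "i < dim_vec (U *\<^sub>v b)"
    hence i: "i < n" using U by simp
    have "0 = (M *\<^sub>v z) $ i" using z(3) i np by simp
    also have "\<dots> = (\<Sum>j\<in>{0..<p}. M $$ (i,j) * z $ j)"
      using M z(1) i np by (simp add: scalar_prod_def row_def)
    also have "\<dots> = (\<Sum>j\<in>{0..<r}. M $$ (i,j) * z $ j) + (\<Sum>j\<in>{r..<r+g}. M $$ (i,j) * z $ j)"
      unfolding p_def by (rule sum.atLeastLessThan_concat[symmetric], auto)
    also have "(\<Sum>j\<in>{0..<r}. M $$ (i,j) * z $ j) = (V *\<^sub>v a) $ i"
      using V a i np by (simp add: scalar_prod_def row_def M_def a_def p_def)
    also have "(\<Sum>j\<in>{r..<r+g}. M $$ (i,j) * z $ j) = (\<Sum>j\<in>{0..<g}. M $$ (i,j + r) * z $ (j + r))"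
      using sum.shift_bounds_nat_ivl[of "\<lambda>j. M $$ (i,j) * z $ j" 0 r g] by (simp add: add.commute)
    also have "\<dots> = - (U *\<^sub>v b) $ i"
      using U b i np by (simp add: scalar_prod_def row_def M_def b_def p_def sum_negf[symmetric] add.commute)
    finally show "(V *\<^sub>v a) $ i = (U *\<^sub>v b) $ i" by simp
  qed (insert V U, auto)
  thus ?thesis using a b nz by blast
qed


section \<open>Min-max style witnesses\<close>

definition witle :: "real mat \<Rightarrow> nat \<Rightarrow> real \<Rightarrow> nat \<Rightarrow> bool" where
  "witle A n c r \<longleftrightarrow> (\<exists>V. V \<in> carrier_mat n r \<and> (\<forall>a\<in>carrier_vec r. V *\<^sub>v a = 0\<^sub>v n \<longrightarrow> a = 0\<^sub>v r)
     \<and> (\<forall>a\<in>carrier_vec r. (V *\<^sub>v a) \<bullet> (A *\<^sub>v (V *\<^sub>v a)) \<le> c * ((V *\<^sub>v a) \<bullet> (V *\<^sub>v a))))"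

lemma spec_wit_exists:
  fixes A Q D :: "real mat"
  assumes Q: "Q \<in> carrier_mat n n" and QQ: "transpose_mat Q * Q = 1\<^sub>m n"
    and D: "D \<in> carrier_mat n n" and Dd: "diagonal_mat D" and AQ: "A = Q * D * transpose_mat Q"
  shows "witle A n c (length (filter (\<lambda>j. D $$ (j,j) \<le> c) [0..<n]))"
proof -
  define J where "J = filter (\<lambda>j. D $$ (j,j) \<le> c) [0..<n]"
  define r where "r = length J"
  define V where "V = Q * selm n J"
  have E: "selm n J \<in> carrier_mat n r" unfolding r_def by (rule selm_carrier)
  have V: "V \<in> carrier_mat n r" unfolding V_def using Q E by auto
  have dJ: "distinct J" unfolding J_def by simp
  have Jn: "\<And>k. k < r \<Longrightarrow> J ! k < n" unfolding r_def J_def using nth_mem by fastforce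
  have Va: "V *\<^sub>v a = Q *\<^sub>v (selm n J *\<^sub>v a)" if "a \<in> carrier_vec r" for a
    unfolding V_def using Q E that by auto
  have inj: "a = 0\<^sub>v r" if a: "a \<in> carrier_vec r" and V0: "V *\<^sub>v a = 0\<^sub>v n" for a
  proof -
    have y: "selm n J *\<^sub>v a \<in> carrier_vec n" using E a by auto
    have y0: "selm n J *\<^sub>v a = 0\<^sub>v n" by (rule orth_inj[OF Q QQ y], insert V0 Va[OF a], auto)
    show ?thesis
    proof (rule eq_vecI)
      fix k assume "k < dim_vec (0\<^sub>v r :: real vec)"
      hence k: "k < r" by simp
      have "a $ k = (selm n J *\<^sub>v a) $ (J ! k)"
        by (rule selm_in[symmetric], insert a dJ k Jn[OF k], auto simp: r_def)
      thus "a $ k = 0\<^sub>v r $ k" using y0 Jn[OF k] k by simp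
    qed (insert a, auto)
  qed
  have qf: "(V *\<^sub>v a) \<bullet> (A *\<^sub>v (V *\<^sub>v a)) \<le> c * ((V *\<^sub>v a) \<bullet> (V *\<^sub>v a))" if a: "a \<in> carrier_vec r" for a
  proof -
    define y where "y = selm n J *\<^sub>v a"
    have y: "y \<in> carrier_vec n" unfolding y_def using E a by auto
    have "(V *\<^sub>v a) \<bullet> (A *\<^sub>v (V *\<^sub>v a)) = (\<Sum>i<n. D $$ (i,i) * (y $ i)^2)"
      unfolding Va[OF a] y_def[symmetric] by (rule spec_qf(1)[OF Q QQ D Dd AQ y])
    also have "\<dots> \<le> (\<Sum>i<n. c * (y $ i)^2)"
    proof (rule sum_mono)
      fix i assume "i \<in> {..<n}"
      hence i: "i < n" by simp
      show "D $$ (i,i) * (y $ i)^2 \<le> c * (y $ i)^2"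
      proof (cases "D $$ (i,i) \<le> c")
        case True thus ?thesis by (intro mult_right_mono, auto)
      next
        case False
        hence "i \<notin> set J" unfolding J_def by auto
        hence "y $ i = 0" unfolding y_def using selm_out[of a J i n] a i by (simp add: r_def)
        thus ?thesis by simp
      qed
    qed
    also have "\<dots> = c * ((V *\<^sub>v a) \<bullet> (V *\<^sub>v a))"
      unfolding Va[OF a] y_def[symmetric] spec_qf(2)[OF Q QQ D Dd AQ y] by (simp add: sum_distrib_left)
    finally show ?thesis .
  qed
  show ?thesis unfolding witle_def J_def[symmetric] r_def[symmetric] using V inj qf by blast
qed

lemma spec_wit_bound:
  fixes A Q D :: "real mat"
  assumes Q: "Q \<in> carrier_mat n n" and QQ: "transpose_mat Q * Q = 1\<^sub>m n"
    and D: "D \<in> carrier_mat n n" and Dd: "diagonal_mat D" and AQ: "A = Q * D * transpose_mat Q"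
    and w: "witle A n c r"
  shows "r \<le> length (filter (\<lambda>j. D $$ (j,j) \<le> c) [0..<n])"
proof (rule ccontr)
  assume "\<not> ?thesis"
  hence lt: "length (filter (\<lambda>j. D $$ (j,j) \<le> c) [0..<n]) < r" by simp
  from w obtain V where V: "V \<in> carrier_mat n r" and inj: "\<And>a. a\<in>carrier_vec r \<Longrightarrow> V *\<^sub>v a = 0\<^sub>v n \<Longrightarrow> a = 0\<^sub>v r"
    and qf: "\<And>a. a\<in>carrier_vec r \<Longrightarrow> (V *\<^sub>v a) \<bullet> (A *\<^sub>v (V *\<^sub>v a)) \<le> c * ((V *\<^sub>v a) \<bullet> (V *\<^sub>v a))"
    unfolding witle_def by blast
  define K where "K = filter (\<lambda>j. \<not> D $$ (j,j) \<le> c) [0..<n]"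
  define g where "g = length K"
  have "length (filter (\<lambda>j. D $$ (j,j) \<le> c) [0..<n]) + g = n"
    unfolding g_def K_def using sum_length_filter_compl[of "\<lambda>j. D $$ (j,j) \<le> c" "[0..<n]"] by simp
  hence ng: "n < r + g" using lt by linarith
  define U where "U = Q * selm n K"
  have E: "selm n K \<in> carrier_mat n g" unfolding g_def by (rule selm_carrier)
  have U: "U \<in> carrier_mat n g" unfolding U_def using Q E by auto
  have dK: "distinct K" unfolding K_def by simp
  have Kn: "\<And>k. k < g \<Longrightarrow> K ! k < n" unfolding g_def K_def using nth_mem by fastforce
  obtain a b where a: "a \<in> carrier_vec r" and b: "b \<in> carrier_vec g" and nz: "a \<noteq> 0\<^sub>v r \<or> b \<noteq> 0\<^sub>v g"
    and eq: "V *\<^sub>v a = U *\<^sub>v b"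
    using wide_kernel[OF V U ng] by blast
  define y where "y = selm n K *\<^sub>v b"
  have y: "y \<in> carrier_vec n" unfolding y_def using E b by auto
  have Ub: "U *\<^sub>v b = Q *\<^sub>v y" unfolding U_def y_def using Q E b by auto
  have "y \<noteq> 0\<^sub>v n"
  proof
    assume y0: "y = 0\<^sub>v n"
    have b0: "b = 0\<^sub>v g"
    proof (rule eq_vecI)
      fix k assume "k < dim_vec (0\<^sub>v g :: real vec)"
      hence k: "k < g" by simp
      have "b $ k = y $ (K ! k)" unfolding y_def
        by (rule selm_in[symmetric], insert b dK k Kn[OF k], auto simp: g_def)
      thus "b $ k = 0\<^sub>v g $ k" using y0 Kn[OF k] k by simp
    qed (insert b, auto)
    have "V *\<^sub>v a = 0\<^sub>v n" unfolding eq Ub y0 using Q by auto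
    hence "a = 0\<^sub>v r" using inj[OF a] by auto
    with b0 nz show False by auto
  qed
  then obtain i where i: "i < n" and yi: "y $ i \<noteq> 0" using y by (metis eq_vecI carrier_vecD index_zero_vec)
  have iK: "i \<in> set K"
  proof (rule ccontr)
    assume "i \<notin> set K"
    hence "y $ i = 0" unfolding y_def using selm_out[of b K i n] b i by (simp add: g_def)
    with yi show False by simp
  qed
  hence Di: "D $$ (i,i) > c" unfolding K_def by auto
  have "(\<Sum>j<n. D $$ (j,j) * (y $ j)^2) \<le> c * (\<Sum>j<n. (y $ j)^2)"
    using qf[OF a] unfolding eq Ub spec_qf(1)[OF Q QQ D Dd AQ y] spec_qf(2)[OF Q QQ D Dd AQ y] .
  hence le: "(\<Sum>j<n. (D $$ (j,j) - c) * (y $ j)^2) \<le> 0"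
    by (simp add: sum_distrib_left left_diff_distrib sum_subtractf)
  have "(\<Sum>j<n. (D $$ (j,j) - c) * (y $ j)^2) > 0"
  proof (rule sum_pos2[of "{..<n}" i])
    show "0 < (D $$ (i,i) - c) * (y $ i)^2" using Di yi by simp
    show "0 \<le> (D $$ (j,j) - c) * (y $ j)^2" if "j \<in> {..<n}" for j
    proof -
      from that have j: "j < n" by simp
      show ?thesis
      proof (cases "D $$ (j,j) \<le> c")
        case False thus ?thesis by simp
      next
        case True
        hence "j \<notin> set K" unfolding K_def by auto
        hence "y $ j = 0" unfolding y_def using selm_out[of b K j n] b j by (simp add: g_def)
        thus ?thesis by simp
      qed
    qed
  qed (insert i, auto)
  with le show False by simp
qed


definition cntP :: "real mat \<Rightarrow> (real \<Rightarrow> bool) \<Rightarrow> nat" where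
  "cntP A P = size (filter_mset P (proots (char_poly A)))"

lemma cnt_spec:
  fixes A Q D :: "real mat"
  assumes Q: "Q \<in> carrier_mat n n" and QQ: "transpose_mat Q * Q = 1\<^sub>m n" and QQ': "Q * transpose_mat Q = 1\<^sub>m n"
    and D: "D \<in> carrier_mat n n" and Dd: "diagonal_mat D" and AQ: "A = Q * D * transpose_mat Q"
  shows "cntP A P = length (filter (\<lambda>j. P (D $$ (j,j))) [0..<n])"
proof -
  have "cntP A P = size (filter_mset P (mset (diag_mat D)))"
    unfolding cntP_def spec_proots[OF Q QQ QQ' D Dd AQ] ..
  also have "\<dots> = length (filter P (diag_mat D))" by (simp flip: mset_filter)
  also have "diag_mat D = map (\<lambda>j. D $$ (j,j)) [0..<n]" using D by (simp add: diag_mat_def)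
  finally show ?thesis by (simp add: filter_map o_def)
qed

definition symm :: "real mat \<Rightarrow> nat \<Rightarrow> bool" where
  "symm A n \<longleftrightarrow> A \<in> carrier_mat n n \<and> transpose_mat A = A"

lemma symm_cnt_wit:
  assumes "symm A n"
  shows "witle A n c (cntP A (\<lambda>x. x \<le> c))" and "witle A n c r \<Longrightarrow> r \<le> cntP A (\<lambda>x. x \<le> c)"
    and "size (proots (char_poly A)) = n"
proof -
  obtain Q D where Q: "Q \<in> carrier_mat n n" and QQ: "transpose_mat Q * Q = 1\<^sub>m n" and QQ': "Q * transpose_mat Q = 1\<^sub>m n"
    and D: "D \<in> carrier_mat n n" and Dd: "diagonal_mat D" and AQ: "A = Q * D * transpose_mat Q"
  proof -
    have ex: "\<exists>Q D. Q \<in> carrier_mat n n \<and> transpose_mat Q * Q = 1\<^sub>m n \<and> Q * transpose_mat Q = 1\<^sub>m n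
     \<and> D \<in> carrier_mat n n \<and> diagonal_mat D \<and> A = Q * D * transpose_mat Q"
      by (rule spectral, insert assms, auto simp: symm_def)
    show thesis by (insert ex, elim exE conjE, rule that, assumption+)
  qed
  note c = cnt_spec[OF Q QQ QQ' D Dd AQ]
  show "witle A n c (cntP A (\<lambda>x. x \<le> c))" unfolding c by (rule spec_wit_exists[OF Q QQ D Dd AQ])
  show "witle A n c r \<Longrightarrow> r \<le> cntP A (\<lambda>x. x \<le> c)" unfolding c by (rule spec_wit_bound[OF Q QQ D Dd AQ])
  show "size (proots (char_poly A)) = n" unfolding spec_proots[OF Q QQ QQ' D Dd AQ] using D
    by (simp add: diag_mat_def)
qed

lemma symm_cnt_neg:
  assumes "symm A n"
  shows "cntP A (\<lambda>x. x \<ge> c) = cntP (- A) (\<lambda>x. x \<le> - c)" and "symm (- A) n"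
proof -
  obtain Q D where Q: "Q \<in> carrier_mat n n" and QQ: "transpose_mat Q * Q = 1\<^sub>m n" and QQ': "Q * transpose_mat Q = 1\<^sub>m n"
    and D: "D \<in> carrier_mat n n" and Dd: "diagonal_mat D" and AQ: "A = Q * D * transpose_mat Q"
  proof -
    have ex: "\<exists>Q D. Q \<in> carrier_mat n n \<and> transpose_mat Q * Q = 1\<^sub>m n \<and> Q * transpose_mat Q = 1\<^sub>m n
     \<and> D \<in> carrier_mat n n \<and> diagonal_mat D \<and> A = Q * D * transpose_mat Q"
      by (rule spectral, insert assms, auto simp: symm_def)
    show thesis by (insert ex, elim exE conjE, rule that, assumption+)
  qed
  have D': "- D \<in> carrier_mat n n" using D by auto
  have Dd': "diagonal_mat (- D)" using Dd D unfolding diagonal_mat_def by auto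
  have e1: "Q * (- D) = - (Q * D)" by (rule uminus_mult_right_mat, insert Q D, auto)
  have e2: "(- (Q * D)) * transpose_mat Q = - (Q * D * transpose_mat Q)"
    by (rule uminus_mult_left_mat, insert Q D, auto)
  have AQ': "- A = Q * (- D) * transpose_mat Q" unfolding AQ e1 e2 ..
  show "cntP A (\<lambda>x. x \<ge> c) = cntP (- A) (\<lambda>x. x \<le> - c)"
    unfolding cnt_spec[OF Q QQ QQ' D Dd AQ] cnt_spec[OF Q QQ QQ' D' Dd' AQ']
    by (rule arg_cong[of _ _ length], rule filter_cong, insert D, auto)
  have tr: "transpose_mat (- A) = - (transpose_mat A)" by (rule eq_matI, auto)
  show "symm (- A) n" using assms unfolding symm_def tr by auto
qed

definition subm :: "real mat \<Rightarrow> nat \<Rightarrow> (nat \<Rightarrow> nat) \<Rightarrow> real mat" where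
  "subm A m f = mat m m (\<lambda>(i,j). A $$ (f i, f j))"

lemma wit_embed:
  assumes A: "A \<in> carrier_mat n n" and f: "\<And>i. i < m \<Longrightarrow> f i < n" and inj: "inj_on f {..<m}"
    and w: "witle (subm A m f) m c r"
  shows "witle A n c r"
proof -
  define B where "B = subm A m f"
  define P :: "real mat" where "P = mat n m (\<lambda>(i,j). if i = f j then 1 else 0)"
  have P: "P \<in> carrier_mat n m" unfolding P_def by auto
  have B: "B \<in> carrier_mat m m" unfolding B_def subm_def by auto
  have colP: "col P j = unit_vec n (f j)" if "j < m" for j
    by (rule eq_vecI, insert that f[OF that], auto simp: P_def)
  have PP: "transpose_mat P * P = 1\<^sub>m m"
  proof (rule eq_matI)
    fix i j assume "i < dim_row (1\<^sub>m m :: real mat)" "j < dim_col (1\<^sub>m m :: real mat)"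
    hence ij: "i < m" "j < m" by auto
    have "(transpose_mat P * P) $$ (i,j) = unit_vec n (f i) \<bullet> unit_vec n (f j)"
      using ij P by (simp add: colP)
    also have "\<dots> = (if i = j then 1 else 0)"
      using ij f[OF ij(1)] f[OF ij(2)] inj unfolding inj_on_def by (subst scalar_prod_left_unit, auto)
    finally show "(transpose_mat P * P) $$ (i,j) = 1\<^sub>m m $$ (i,j)" using ij by simp
  qed (insert P, auto)
  have PAP: "transpose_mat P * A * P = B"
  proof (rule eq_matI)
    fix i j assume "i < dim_row B" "j < dim_col B"
    hence ij: "i < m" "j < m" using B by auto
    have "(transpose_mat P * A * P) $$ (i,j) = row (transpose_mat P * A) i \<bullet> col P j"
      by (rule index_mult_mat(1), insert ij P A, auto)
    also have "\<dots> = row (transpose_mat P * A) i \<bullet> unit_vec n (f j)" unfolding colP[OF ij(2)] ..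
    also have "\<dots> = row (transpose_mat P * A) i $ (f j)"
      by (rule scalar_prod_right_unit, rule f[OF ij(2)])
    also have "\<dots> = (transpose_mat P * A) $$ (i, f j)"
      by (rule index_row, insert ij P A f[OF ij(2)], auto)
    also have "\<dots> = row (transpose_mat P) i \<bullet> col A (f j)"
      by (rule index_mult_mat(1), insert ij P A f[OF ij(2)], auto)
    also have "row (transpose_mat P) i \<bullet> col A (f j) = unit_vec n (f i) \<bullet> col A (f j)"
      using row_transpose[of i P] colP[OF ij(1)] ij P by auto
    also have "\<dots> = A $$ (f i, f j)" using ij A f[OF ij(1)] f[OF ij(2)] by simp
    finally show "(transpose_mat P * A * P) $$ (i,j) = B $$ (i,j)" using ij by (simp add: B_def subm_def)
  qed (insert P A B, auto)
  from w obtain V where V: "V \<in> carrier_mat m r" and vinj: "\<And>a. a\<in>carrier_vec r \<Longrightarrow> V *\<^sub>v a = 0\<^sub>v m \<Longrightarrow> a = 0\<^sub>v r"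
    and qf: "\<And>a. a\<in>carrier_vec r \<Longrightarrow> (V *\<^sub>v a) \<bullet> (B *\<^sub>v (V *\<^sub>v a)) \<le> c * ((V *\<^sub>v a) \<bullet> (V *\<^sub>v a))"
    unfolding witle_def B_def by blast
  define W where "W = P * V"
  have W: "W \<in> carrier_mat n r" unfolding W_def using P V by auto
  have Wa: "W *\<^sub>v a = P *\<^sub>v (V *\<^sub>v a)" if "a \<in> carrier_vec r" for a
    unfolding W_def using P V that by auto
  have bk: "transpose_mat P *\<^sub>v (P *\<^sub>v y) = y" if "y \<in> carrier_vec m" for y
    using assoc_mult_mat_vec[of "transpose_mat P" m n P m y, symmetric] P that PP by auto
  have sp: "(P *\<^sub>v y) \<bullet> (P *\<^sub>v y) = y \<bullet> y" if y: "y \<in> carrier_vec m" for y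
  proof -
    have "(P *\<^sub>v y) \<bullet> (P *\<^sub>v y) = (transpose_mat P *\<^sub>v (P *\<^sub>v y)) \<bullet> y"
      by (rule transpose_vec_mult_scalar[symmetric, OF P y], insert P y, auto)
    thus ?thesis using bk[OF y] by simp
  qed
  have qfP: "(P *\<^sub>v y) \<bullet> (A *\<^sub>v (P *\<^sub>v y)) = y \<bullet> (B *\<^sub>v y)" if y: "y \<in> carrier_vec m" for y
  proof -
    have "(P *\<^sub>v y) \<bullet> (A *\<^sub>v (P *\<^sub>v y)) = (A *\<^sub>v (P *\<^sub>v y)) \<bullet> (P *\<^sub>v y)"
      by (rule comm_scalar_prod[of _ n], insert P A y, auto)
    also have "\<dots> = (transpose_mat P *\<^sub>v (A *\<^sub>v (P *\<^sub>v y))) \<bullet> y"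
      by (rule transpose_vec_mult_scalar[symmetric, OF P y], insert P A y, auto)
    also have "transpose_mat P *\<^sub>v (A *\<^sub>v (P *\<^sub>v y)) = B *\<^sub>v y"
    proof -
      have "(transpose_mat P * A * P) *\<^sub>v y = (transpose_mat P * A) *\<^sub>v (P *\<^sub>v y)"
        by (rule assoc_mult_mat_vec[of _ m n P m y], insert P A y, auto)
      also have "\<dots> = transpose_mat P *\<^sub>v (A *\<^sub>v (P *\<^sub>v y))"
        by (rule assoc_mult_mat_vec[of _ m n A n], insert P A y, auto)
      finally show ?thesis unfolding PAP by simp
    qed
    also have "(B *\<^sub>v y) \<bullet> y = y \<bullet> (B *\<^sub>v y)" by (rule comm_scalar_prod[of _ m], insert B y, auto)
    finally show ?thesis .
  qed
  have i1: "\<forall>a\<in>carrier_vec r. W *\<^sub>v a = 0\<^sub>v n \<longrightarrow> a = 0\<^sub>v r"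
  proof (intro ballI impI)
    fix a :: "real vec" assume a: "a \<in> carrier_vec r" and W0: "W *\<^sub>v a = 0\<^sub>v n"
    have Va: "V *\<^sub>v a \<in> carrier_vec m" using V a by auto
    have "V *\<^sub>v a = transpose_mat P *\<^sub>v (P *\<^sub>v (V *\<^sub>v a))" using bk[OF Va] by simp
    also have "\<dots> = transpose_mat P *\<^sub>v 0\<^sub>v n" using Wa[OF a] W0 by simp
    also have "\<dots> = 0\<^sub>v m" by (rule eq_vecI, insert P, auto)
    finally have "V *\<^sub>v a = 0\<^sub>v m" .
    thus "a = 0\<^sub>v r" by (rule vinj[OF a])
  qed
  have i2: "\<forall>a\<in>carrier_vec r. (W *\<^sub>v a) \<bullet> (A *\<^sub>v (W *\<^sub>v a)) \<le> c * ((W *\<^sub>v a) \<bullet> (W *\<^sub>v a))"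
  proof
    fix a :: "real vec" assume a: "a \<in> carrier_vec r"
    have Va: "V *\<^sub>v a \<in> carrier_vec m" using V a by auto
    show "(W *\<^sub>v a) \<bullet> (A *\<^sub>v (W *\<^sub>v a)) \<le> c * ((W *\<^sub>v a) \<bullet> (W *\<^sub>v a))"
      unfolding Wa[OF a] qfP[OF Va] sp[OF Va] by (rule qf[OF a])
  qed
  show ?thesis unfolding witle_def using W i1 i2 by blast
qed


lemma sorted_le_iff:
  fixes L :: "real list"
  assumes L: "sorted L" and i: "1 \<le> i" "i \<le> length L"
  shows "L ! (i - 1) \<le> c \<longleftrightarrow> i \<le> length (filter (\<lambda>x. x \<le> c) L)"
proof -
  have len: "length (filter (\<lambda>x. x \<le> c) L) = card {j. j < length L \<and> L ! j \<le> c}"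
    by (rule length_filter_conv_card)
  show ?thesis
  proof
    assume le: "L ! (i - 1) \<le> c"
    have "{0..<i} \<subseteq> {j. j < length L \<and> L ! j \<le> c}"
    proof
      fix j assume "j \<in> {0..<i}"
      hence j: "j \<le> i - 1" "j < length L" using i by auto
      have "L ! j \<le> L ! (i - 1)" by (rule sorted_nth_mono[OF L j(1)], insert i, auto)
      thus "j \<in> {j. j < length L \<and> L ! j \<le> c}" using le j by auto
    qed
    from card_mono[OF _ this] show "i \<le> length (filter (\<lambda>x. x \<le> c) L)" unfolding len by auto
  next
    assume ge: "i \<le> length (filter (\<lambda>x. x \<le> c) L)"
    show "L ! (i - 1) \<le> c"
    proof (rule ccontr)
      assume "\<not> L ! (i - 1) \<le> c"
      hence gt: "L ! (i - 1) > c" by simp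
      have "{j. j < length L \<and> L ! j \<le> c} \<subseteq> {0..<i - 1}"
      proof
        fix j assume j: "j \<in> {j. j < length L \<and> L ! j \<le> c}"
        show "j \<in> {0..<i - 1}"
        proof (rule ccontr)
          assume "j \<notin> {0..<i - 1}"
          hence "i - 1 \<le> j" by auto
          hence "L ! (i - 1) \<le> L ! j" using j by (intro sorted_nth_mono[OF L], auto)
          thus False using gt j by auto
        qed
      qed
      from card_mono[OF _ this] have "card {j. j < length L \<and> L ! j \<le> c} \<le> i - 1" by auto
      thus False using ge i unfolding len by auto
    qed
  qed
qed

lemma sorted_ge_iff:
  fixes L :: "real list"
  assumes L: "sorted L" and i: "1 \<le> i" "i \<le> length L"
  shows "L ! (i - 1) \<ge> c \<longleftrightarrow> length L - i + 1 \<le> length (filter (\<lambda>x. x \<ge> c) L)"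
proof -
  have len: "length (filter (\<lambda>x. x \<ge> c) L) = card {j. j < length L \<and> L ! j \<ge> c}"
    by (rule length_filter_conv_card)
  show ?thesis
  proof
    assume le: "L ! (i - 1) \<ge> c"
    have "{i - 1..<length L} \<subseteq> {j. j < length L \<and> L ! j \<ge> c}"
    proof
      fix j assume "j \<in> {i - 1..<length L}"
      hence j: "i - 1 \<le> j" "j < length L" by auto
      have "L ! (i - 1) \<le> L ! j" by (rule sorted_nth_mono[OF L j(1) j(2)])
      thus "j \<in> {j. j < length L \<and> L ! j \<ge> c}" using le j by auto
    qed
    from card_mono[OF _ this] show "length L - i + 1 \<le> length (filter (\<lambda>x. x \<ge> c) L)"
      unfolding len using i by auto
  next
    assume ge: "length L - i + 1 \<le> length (filter (\<lambda>x. x \<ge> c) L)"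
    show "L ! (i - 1) \<ge> c"
    proof (rule ccontr)
      assume "\<not> L ! (i - 1) \<ge> c"
      hence gt: "L ! (i - 1) < c" by simp
      have "{j. j < length L \<and> L ! j \<ge> c} \<subseteq> {i..<length L}"
      proof
        fix j assume j: "j \<in> {j. j < length L \<and> L ! j \<ge> c}"
        show "j \<in> {i..<length L}"
        proof (rule ccontr)
          assume "j \<notin> {i..<length L}"
          hence "j \<le> i - 1" using j i by auto
          hence "L ! j \<le> L ! (i - 1)" using i by (intro sorted_nth_mono[OF L], auto)
          thus False using gt j by auto
        qed
      qed
      from card_mono[OF _ this] have "card {j. j < length L \<and> L ! j \<ge> c} \<le> length L - i" by auto
      thus False using ge i unfolding len by auto
    qed
  qed
qed

lemma eig_iff:
  assumes A: "symm A n" and i: "1 \<le> i" "i \<le> n"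
  shows "eig A i \<le> c \<longleftrightarrow> i \<le> cntP A (\<lambda>x. x \<le> c)"
    and "eig A i \<ge> c \<longleftrightarrow> n - i + 1 \<le> cntP A (\<lambda>x. x \<ge> c)"
proof -
  define M where "M = proots (char_poly A)"
  define L where "L = sorted_list_of_multiset M"
  have sL: "sorted L" unfolding L_def by simp
  have mL: "mset L = M" unfolding L_def by simp
  have lL: "length L = n" using symm_cnt_wit(3)[OF A] mL unfolding M_def by (metis size_mset)
  have cnt: "cntP A P = length (filter P L)" for P
    unfolding cntP_def M_def[symmetric] mL[symmetric] by (simp flip: mset_filter)
  have e: "eig A i = L ! (i - 1)" unfolding eig_def L_def M_def ..
  show "eig A i \<le> c \<longleftrightarrow> i \<le> cntP A (\<lambda>x. x \<le> c)"
    unfolding e cnt by (rule sorted_le_iff[OF sL], insert i lL, auto)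
  show "eig A i \<ge> c \<longleftrightarrow> n - i + 1 \<le> cntP A (\<lambda>x. x \<ge> c)"
    unfolding e cnt using sorted_ge_iff[OF sL, of i c] i lL by auto
qed

section \<open>Cauchy interlacing\<close>

lemma interlace:
  assumes A: "symm A n" and f: "\<And>j. j < m \<Longrightarrow> f j < n" and inj: "inj_on f {..<m}"
    and i: "1 \<le> i" "i \<le> m"
  shows "eig A i \<le> eig (subm A m f) i" and "eig (subm A m f) i \<le> eig A (i + n - m)"
proof -
  define B where "B = subm A m f"
  have Ac: "A \<in> carrier_mat n n" and At: "transpose_mat A = A" using A unfolding symm_def by auto
  have Aij: "A $$ (i,j) = A $$ (j,i)" if "i < n" "j < n" for i j
    using arg_cong[OF At, of "\<lambda>M. M $$ (j,i)"] Ac that by auto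
  have B: "symm B m" unfolding symm_def B_def subm_def
    by (auto intro!: eq_matI simp: Aij f)
  have mn: "m \<le> n"
  proof -
    have "card {..<m} \<le> card {..<n}" by (rule card_inj_on_le[OF inj], insert f, auto)
    thus ?thesis by simp
  qed
  define c where "c = eig B i"
  have "i \<le> cntP B (\<lambda>x. x \<le> c)" using eig_iff(1)[OF B i, of c] unfolding c_def by simp
  also have "cntP B (\<lambda>x. x \<le> c) \<le> cntP A (\<lambda>x. x \<le> c)"
  proof (rule symm_cnt_wit(2)[OF A])
    have "witle (subm A m f) m c (cntP B (\<lambda>x. x \<le> c))"
      using symm_cnt_wit(1)[OF B, of c] unfolding B_def .
    from wit_embed[OF Ac f inj this] show "witle A n c (cntP B (\<lambda>x. x \<le> c))" .
  qed
  finally have "eig A i \<le> c" using eig_iff(1)[OF A i(1), of c] i mn by auto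
  thus "eig A i \<le> eig (subm A m f) i" unfolding c_def B_def .
  have dA: "dim_row A = n" "dim_col A = n" using Ac by auto
  have nB: "- B = subm (- A) m f" unfolding B_def subm_def by (rule eq_matI, auto simp: f dA)
  have "m - i + 1 \<le> cntP B (\<lambda>x. x \<ge> c)" using eig_iff(2)[OF B i, of c] unfolding c_def by simp
  also have "cntP B (\<lambda>x. x \<ge> c) = cntP (- B) (\<lambda>x. x \<le> - c)" by (rule symm_cnt_neg(1)[OF B])
  also have "\<dots> \<le> cntP (- A) (\<lambda>x. x \<le> - c)"
  proof (rule symm_cnt_wit(2)[OF symm_cnt_neg(2)[OF A]])
    have "witle (subm (- A) m f) m (- c) (cntP (- B) (\<lambda>x. x \<le> - c))"
      using symm_cnt_wit(1)[OF symm_cnt_neg(2)[OF B], of "- c"] unfolding nB .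
    moreover have "- A \<in> carrier_mat n n" using Ac by auto
    ultimately show "witle (- A) n (- c) (cntP (- B) (\<lambda>x. x \<le> - c))"
      using wit_embed[OF _ f inj] by blast
  qed
  also have "\<dots> = cntP A (\<lambda>x. x \<ge> c)" by (rule symm_cnt_neg(1)[OF A, symmetric])
  finally have le: "m - i + 1 \<le> cntP A (\<lambda>x. x \<ge> c)" .
  have "eig A (i + n - m) \<ge> c" using eig_iff(2)[OF A, of "i + n - m" c] le i mn by auto
  thus "eig (subm A m f) i \<le> eig A (i + n - m)" unfolding c_def B_def .
qed


section \<open>Threshold graphs\<close>

lemma threshold_symm: "symm (threshold_adj b) (length b)"
  unfolding symm_def threshold_adj_def by (auto intro!: eq_matI simp: max.commute)

lemma threshold_subm:
  assumes f: "\<And>i. i < length xs \<Longrightarrow> f i < length ys \<and> ys ! f i = xs ! i"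
    and mono: "\<And>i j. i < j \<Longrightarrow> j < length xs \<Longrightarrow> f i < f j"
  shows "threshold_adj xs = subm (threshold_adj ys) (length xs) f"
proof (rule eq_matI)
  fix i j assume "i < dim_row (subm (threshold_adj ys) (length xs) f)" "j < dim_col (subm (threshold_adj ys) (length xs) f)"
  hence ij: "i < length xs" "j < length xs" by (auto simp: subm_def)
  have neq: "(f i \<noteq> f j) = (i \<noteq> j)" using mono[of i j] mono[of j i] ij by (cases i j rule: linorder_cases, auto)
  have mx: "max (f i) (f j) = f (max i j)" using mono[of i j] mono[of j i] ij by (cases i j rule: linorder_cases, auto)
  have "ys ! f (max i j) = xs ! max i j" using f[of "max i j"] ij by auto
  thus "threshold_adj xs $$ (i, j) = subm (threshold_adj ys) (length xs) f $$ (i, j)"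
    using ij f[of i] f[of j] neq mx by (simp add: threshold_adj_def subm_def)
qed (auto simp: subm_def threshold_adj_def)

lemma subseq_index:
  assumes "subseq xs ys"
  shows "\<exists>f. (\<forall>i<length xs. f i < length ys \<and> ys ! f i = xs ! i) \<and> (\<forall>i j. i < j \<longrightarrow> j < length xs \<longrightarrow> f i < f j)"
  using assms
proof (induction rule: list_emb.induct)
  case (list_emb_Nil ys)
  show ?case by auto
next
  case (list_emb_Cons xs ys y)
  then obtain f where f: "\<forall>i<length xs. f i < length ys \<and> ys ! f i = xs ! i"
    and m: "\<forall>i j. i < j \<longrightarrow> j < length xs \<longrightarrow> f i < f j" by blast
  show ?case by (rule exI[of _ "\<lambda>i. Suc (f i)"], insert f m, auto)
next
  case (list_emb_Cons2 x y xs ys)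
  then obtain f where f: "\<forall>i<length xs. f i < length ys \<and> ys ! f i = xs ! i"
    and m: "\<forall>i j. i < j \<longrightarrow> j < length xs \<longrightarrow> f i < f j" by blast
  define g where "g = (\<lambda>i. if i = 0 then 0 else Suc (f (i - 1)))"
  have g1: "\<forall>i<length (x # xs). g i < length (y # ys) \<and> (y # ys) ! g i = (x # xs) ! i"
  proof (intro allI impI)
    fix i assume i: "i < length (x # xs)"
    show "g i < length (y # ys) \<and> (y # ys) ! g i = (x # xs) ! i"
      using f i list_emb_Cons2.hyps(1) by (cases i, auto simp: g_def)
  qed
  have g2: "\<forall>i j. i < j \<longrightarrow> j < length (x # xs) \<longrightarrow> g i < g j"
  proof (intro allI impI)
    fix i j assume ij: "i < j" "j < length (x # xs)"
    show "g i < g j" using m ij by (cases i; cases j, auto simp: g_def)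
  qed
  show ?case using g1 g2 by blast
qed

lemma subseq_concat_map:
  assumes "\<And>i. i \<in> set is \<Longrightarrow> subseq (g i) (h i)"
  shows "subseq (concat (map g is)) (concat (map h is))"
  using assms by (induction "is", auto intro: list_emb_append_mono)

lemma subseq_replicate: "a \<le> b \<Longrightarrow> subseq (replicate a x) (replicate b x)"
proof -
  assume "a \<le> b"
  hence "replicate b x = replicate (b - a) x @ replicate a x" by (simp add: replicate_add[symmetric])
  thus ?thesis by (metis list_emb_append2 subseq_order.order_refl)
qed

lemma block_subseq:
  assumes len: "length ss' = length ss" "length ts' = length ts" "length ss = length ts"
    and le: "\<And>i. i < length ss \<Longrightarrow> ss' ! i \<le> ss ! i \<and> ts' ! i \<le> ts ! i"
  shows "subseq (block_string ss' ts') (block_string ss ts)"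
  unfolding block_string_def len(1)
  by (rule subseq_concat_map, rule list_emb_append_mono, insert le, auto intro: subseq_replicate)

lemma block_length_rep: "length (block_string (replicate k s) (replicate k t)) = k * (s + t)"
proof -
  have "(\<Sum>x\<leftarrow>[0..<k]. replicate k s ! x + replicate k t ! x) = (\<Sum>x\<leftarrow>[0..<k]. s + t)"
    by (rule arg_cong[of _ _ sum_list], rule map_cong, auto)
  thus ?thesis unfolding block_string_def by (simp add: length_concat o_def sum_list_triv)
qed

lemma interlace_subseq:
  assumes sq: "subseq xs ys" and i: "1 \<le> i" "i \<le> length xs"
  shows "eig (threshold_adj ys) i \<le> eig (threshold_adj xs) i"
    and "eig (threshold_adj xs) i \<le> eig (threshold_adj ys) (i + length ys - length xs)"
proof -
  obtain f where f: "\<forall>i<length xs. f i < length ys \<and> ys ! f i = xs ! i"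
    and m: "\<forall>i j. i < j \<longrightarrow> j < length xs \<longrightarrow> f i < f j" using subseq_index[OF sq] by blast
  have eq: "threshold_adj xs = subm (threshold_adj ys) (length xs) f"
    by (rule threshold_subm, insert f m, auto)
  have inj: "inj_on f {..<length xs}"
    unfolding inj_on_def using m by (metis lessThan_iff linorder_neqE_nat less_not_refl)
  have fl: "\<And>j. j < length xs \<Longrightarrow> f j < length ys" using f by auto
  note I = interlace[OF threshold_symm fl inj i]
  show "eig (threshold_adj ys) i \<le> eig (threshold_adj xs) i" using I(1) unfolding eq .
  show "eig (threshold_adj xs) i \<le> eig (threshold_adj ys) (i + length ys - length xs)" using I(2) unfolding eq .
qed

theorem theorem5p1:
  fixes ss ts :: "nat list" and k :: nat
  assumes "k \<ge> 1" and "length ss = k" and "length ts = k"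
    and "\<forall>x\<in>set ss. x \<ge> 1" and "\<forall>x\<in>set ts. x \<ge> 1"
  defines "b \<equiv> block_string ss ts"
    and "s \<equiv> Min (set ss)" and "t \<equiv> Min (set ts)"
    and "\<sigma> \<equiv> Max (set ss)" and "\<tau> \<equiv> Max (set ts)"
  defines "b' \<equiv> block_string (replicate k s) (replicate k t)"
    and "b'' \<equiv> block_string (replicate k \<sigma>) (replicate k \<tau>)"
  defines "n \<equiv> length b" and "n' \<equiv> k * (s + t)" and "n'' \<equiv> k * (\<sigma> + \<tau>)"
  shows "(\<forall>i\<in>{1..k}. eig (threshold_adj b'') i \<le> eig (threshold_adj b) i
                     \<and> eig (threshold_adj b) i \<le> eig (threshold_adj b') i)
       \<and> (\<forall>j<k. eig (threshold_adj b') (n' - j) \<le> eig (threshold_adj b) (n - j)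
                \<and> eig (threshold_adj b) (n - j) \<le> eig (threshold_adj b'') (n'' - j))"
proof -
  have ne1: "set ss \<noteq> {}" and ne2: "set ts \<noteq> {}" using assms(1-3) by auto
  have sb: "s \<le> ss ! i \<and> ss ! i \<le> \<sigma>" if "i < k" for i
    unfolding s_def \<sigma>_def using that assms(2) by (auto intro: Min_le Max_ge)
  have tb: "t \<le> ts ! i \<and> ts ! i \<le> \<tau>" if "i < k" for i
    unfolding t_def \<tau>_def using that assms(3) by (auto intro: Min_le Max_ge)
  have s1: "s \<ge> 1" unfolding s_def using Min_in[OF _ ne1] assms(4) by auto
  have t1: "t \<ge> 1" unfolding t_def using Min_in[OF _ ne2] assms(5) by auto
  have sq1: "subseq b' b" unfolding b'_def b_def
    by (rule block_subseq, insert assms(2,3) sb tb, auto)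
  have sq2: "subseq b b''" unfolding b''_def b_def
    by (rule block_subseq, insert assms(2,3) sb tb, auto)
  have ln': "length b' = n'" unfolding b'_def n'_def by (rule block_length_rep)
  have ln'': "length b'' = n''" unfolding b''_def n''_def by (rule block_length_rep)
  have kn': "k \<le> n'" unfolding n'_def using s1 t1 by simp
  have n'n: "n' \<le> n" using list_emb_length[OF sq1] ln' n_def by simp
  have nn'': "n \<le> n''" using list_emb_length[OF sq2] ln'' n_def by simp
  have part1: "\<forall>i\<in>{1..k}. eig (threshold_adj b'') i \<le> eig (threshold_adj b) i
                     \<and> eig (threshold_adj b) i \<le> eig (threshold_adj b') i"
  proof
    fix i assume "i \<in> {1..k}"
    hence i: "1 \<le> i" "i \<le> k" by auto
    show "eig (threshold_adj b'') i \<le> eig (threshold_adj b) i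
        \<and> eig (threshold_adj b) i \<le> eig (threshold_adj b') i"
      using interlace_subseq(1)[OF sq2 i(1)] interlace_subseq(1)[OF sq1 i(1)] i kn' n'n ln' n_def by auto
  qed
  have part2: "\<forall>j<k. eig (threshold_adj b') (n' - j) \<le> eig (threshold_adj b) (n - j)
                \<and> eig (threshold_adj b) (n - j) \<le> eig (threshold_adj b'') (n'' - j)"
  proof (intro allI impI)
    fix j assume j: "j < k"
    have e1: "n' - j + length b - length b' = n - j" using j kn' n'n ln' n_def by simp
    have e2: "n - j + length b'' - length b = n'' - j" using j kn' n'n nn'' ln'' n_def by simp
    have "eig (threshold_adj b') (n' - j) \<le> eig (threshold_adj b) (n' - j + length b - length b')"
      by (rule interlace_subseq(2)[OF sq1], insert j kn' ln', auto)
    moreover have "eig (threshold_adj b) (n - j) \<le> eig (threshold_adj b'') (n - j + length b'' - length b)"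
      by (rule interlace_subseq(2)[OF sq2], insert j kn' n'n n_def, auto)
    ultimately show "eig (threshold_adj b') (n' - j) \<le> eig (threshold_adj b) (n - j)
                \<and> eig (threshold_adj b) (n - j) \<le> eig (threshold_adj b'') (n'' - j)"
      unfolding e1 e2 by simp
  qed
  show ?thesis using part1 part2 by blast
qed

end
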